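(* Let $a$ be a positive integer. The number of distinct $c$-triangles in $\Gamma$ having $a$ as a vertex equals the number of allowable pairs $(m,n)$ satisfying $m^3+2m^2n+mn^2+n^3=a$.
   Context: An allowable pair is $(m,n)\in\mathbb{Z}^2$ with $\gcd(m,n)=1$ and $mn(m+n)\neq0$. Let $t_1(m,n)=m^3+2m^2n+mn^2+n^3$, $t_2(m,n)=m^3-mn^2-n^3$, $t_3(m,n)=m^3+2m^2n+3mn^2+n^3$. For an allowable pair, $c=-A(m,n)/B(m,n)$ with $A(m,n)=m^6+2m^5n+4m^4n^2+8m^3n^3+9m^2n^4+4mn^5+n^6$, $B(m,n)=4m^2n^2(m+n)^2$; these are exactly the rational $c$ for which $f_c(x)=x^2+c$ has a rational $3$-cycle, and the cycle is $\{\frac{t_1}{2mn(m+n)},\frac{t_2}{2mn(m+n)},-\frac{t_3}{2mn(m+n)}\}$ in lowest terms. The graph $\Gamma$ has vertex set the positive integers, with an edge between $a\neq b$ iff there is an allowable pair $(m,n)$ and $i\neq j$ in $\{1,2,3\}$ with $a=|t_i(m,n)|$, $b=|t_j(m,n)|$. For such $c$, the $c$-triangle is the triangle of $\Gamma$ with vertices $|t_1(m,n)|,|t_2(m,n)|,|t_3(m,n)|$ (the absolute values of the numerators of the $3$-cycle of $f_c$); distinct $c$-triangles means $c$-triangles for distinct values of $c$. *)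

theory Defs
  imports Complex_Main
begin

definition allowable :: "int \<Rightarrow> int \<Rightarrow> bool" where
  "allowable m n \<longleftrightarrow> gcd m n = 1 \<and> m * n * (m + n) \<noteq> 0"

definition t1 :: "int \<Rightarrow> int \<Rightarrow> int" where
  "t1 m n = m^3 + 2*m^2*n + m*n^2 + n^3"

definition t2 :: "int \<Rightarrow> int \<Rightarrow> int" where
  "t2 m n = m^3 - m*n^2 - n^3"

definition t3 :: "int \<Rightarrow> int \<Rightarrow> int" where
  "t3 m n = m^3 + 2*m^2*n + 3*m*n^2 + n^3"

definition Apoly :: "int \<Rightarrow> int \<Rightarrow> int" where
  "Apoly m n = m^6 + 2*m^5*n + 4*m^4*n^2 + 8*m^3*n^3 + 9*m^2*n^4 + 4*m*n^5 + n^6"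

definition Bpoly :: "int \<Rightarrow> int \<Rightarrow> int" where
  "Bpoly m n = 4*m^2*n^2*(m+n)^2"

definition cval :: "int \<Rightarrow> int \<Rightarrow> rat" where
  "cval m n = - (of_int (Apoly m n) / of_int (Bpoly m n))"

definition c_triangle :: "int \<Rightarrow> int \<Rightarrow> int set" where
  "c_triangle m n = {\<bar>t1 m n\<bar>, \<bar>t2 m n\<bar>, \<bar>t3 m n\<bar>}"

end

theory Submission
  imports Defs
begin

lemma allow_neg: "allowable m n \<Longrightarrow> allowable (-m) (-n)"
  unfolding allowable_def by (simp add: algebra_simps)

lemma allow_rot2: "allowable m n \<Longrightarrow> allowable (-(m+n)) m"
proof -
  assume h: "allowable m n"
  have "gcd (-(m+n)) m = gcd (m + n) m" by (metis gcd_neg1_int)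
  also have "\<dots> = gcd n m" by (metis gcd_add2 gcd.commute)
  also have "\<dots> = 1" using h unfolding allowable_def by (simp add: gcd.commute)
  finally show ?thesis using h unfolding allowable_def by (simp add: algebra_simps)
qed

lemma allow_rot3: "allowable m n \<Longrightarrow> allowable (-n) (m+n)"
proof -
  assume h: "allowable m n"
  have "gcd (-n) (m+n) = gcd n (m + n)" by simp
  also have "\<dots> = gcd n m" by (metis add.commute gcd_add2)
  also have "\<dots> = 1" using h unfolding allowable_def by (simp add: gcd.commute)
  finally show ?thesis using h unfolding allowable_def by (simp add: algebra_simps)
qed

lemma cval_neg: "cval (-m) (-n) = cval m n"
proof -
  have "Apoly (-m) (-n) = Apoly m n" unfolding Apoly_def by algebra
  moreover have "Bpoly (-m) (-n) = Bpoly m n" unfolding Bpoly_def by algebra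
  ultimately show ?thesis unfolding cval_def by simp
qed

lemma cval_rot2: "cval (-(m+n)) m = cval m n"
proof -
  have "Apoly (-(m+n)) m = Apoly m n" unfolding Apoly_def by algebra
  moreover have "Bpoly (-(m+n)) m = Bpoly m n" unfolding Bpoly_def by algebra
  ultimately show ?thesis unfolding cval_def by simp
qed

lemma cval_rot3: "cval (-n) (m+n) = cval m n"
proof -
  have "Apoly (-n) (m+n) = Apoly m n" unfolding Apoly_def by algebra
  moreover have "Bpoly (-n) (m+n) = Bpoly m n" unfolding Bpoly_def by algebra
  ultimately show ?thesis unfolding cval_def by simp
qed

lemma t1_neg: "t1 (-m) (-n) = - t1 m n" unfolding t1_def by algebra
lemma t1_rot2: "t1 (-(m+n)) m = t2 m n" unfolding t1_def t2_def by algebra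
lemma t1_rot3: "t1 (-n) (m+n) = t3 m n" unfolding t1_def t3_def by algebra

lemma E1: "t1 m n ^ 2 - Apoly m n = 2 * (m*n*(m+n)) * t2 m n"
  unfolding t1_def t2_def Apoly_def by algebra
lemma E2: "t2 m n ^ 2 - Apoly m n = - 2 * (m*n*(m+n)) * t3 m n"
  unfolding t3_def t2_def Apoly_def by algebra
lemma E3: "t3 m n ^ 2 - Apoly m n = 2 * (m*n*(m+n)) * t1 m n"
  unfolding t1_def t3_def Apoly_def by algebra

lemma B_eq: "Bpoly m n = 4 * (m*n*(m+n))^2"
  unfolding Bpoly_def by algebra

lemma coprime_lin:
  fixes A m n K :: int
  assumes "A = n^6 + m*K" "coprime m n"
  shows "coprime A m"
proof (rule coprimeI)
  fix d assume d: "d dvd A" "d dvd m"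
  have "d dvd n^6" using d assms(1)
    by (metis dvd_add_right_iff dvd_mult2 add.commute)
  moreover have "coprime m (n^6)" using assms(2) by simp
  ultimately show "is_unit d" using d(2) coprime_common_divisor by blast
qed

lemma odd_plus2: "odd (x::int) \<Longrightarrow> odd (x + 2*y)" by simp

lemma AB_coprime:
  assumes "allowable m n"
  shows "coprime (Apoly m n) (Bpoly m n)"
proof -
  have cmn: "coprime m n" using assms unfolding allowable_def
    by (simp add: coprime_iff_gcd_eq_1)
  have c1: "coprime (Apoly m n) m"
  proof (rule coprime_lin[where K = "m^5 + 2*m^4*n + 4*m^3*n^2 + 8*m^2*n^3 + 9*m*n^4 + 4*n^5"])
    show "Apoly m n = n ^ 6 + m * (m^5 + 2*m^4*n + 4*m^3*n^2 + 8*m^2*n^3 + 9*m*n^4 + 4*n^5)"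
      unfolding Apoly_def by algebra
  qed (rule cmn)
  have c2: "coprime (Apoly m n) n"
  proof (rule coprime_lin[where K = "2*m^5 + 4*m^4*n + 8*m^3*n^2 + 9*m^2*n^3 + 4*m*n^4 + n^5" and n = m])
    show "Apoly m n = m ^ 6 + n * (2*m^5 + 4*m^4*n + 8*m^3*n^2 + 9*m^2*n^3 + 4*m*n^4 + n^5)"
      unfolding Apoly_def by algebra
  qed (use cmn in \<open>simp add: coprime_commute\<close>)
  have cmn2: "coprime (m+n) n" using cmn gcd_add1[of m n] by (simp add: coprime_iff_gcd_eq_1)
  have c3: "coprime (Apoly m n) (m+n)"
  proof (rule coprime_lin[where K = "(m+n)^5 - 4*(m+n)^4*n + 9*(m+n)^3*n^2 - 8*(m+n)^2*n^3 + 4*(m+n)*n^4 - 2*n^5" and n = n])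
    show "Apoly m n = n ^ 6 + (m + n) * ((m+n)^5 - 4*(m+n)^4*n + 9*(m+n)^3*n^2 - 8*(m+n)^2*n^3 + 4*(m+n)*n^4 - 2*n^5)"
      unfolding Apoly_def by algebra
  qed (rule cmn2)
  have odd: "odd (Apoly m n)"
  proof -
    have ne: "\<not> (even m \<and> even n)"
    proof
      assume "even m \<and> even n"
      hence "2 dvd gcd m n" by simp
      thus False using assms unfolding allowable_def by simp
    qed
    have "Apoly m n = (m^6 + m^2*n^4 + n^6) + 2*(m^5*n + 2*m^4*n^2 + 4*m^3*n^3 + 4*m^2*n^4 + 2*m*n^5)"
      unfolding Apoly_def by algebra
    moreover have "odd (m^6 + m^2*n^4 + n^6)" using ne by auto
    ultimately show ?thesis using odd_plus2 by metis
  qed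
  have c4: "coprime (Apoly m n) 4"
  proof -
    have "coprime (Apoly m n) 2" using odd by (simp add: coprime_commute)
    hence "coprime (Apoly m n) (2*2)" by (simp only: coprime_mult_right_iff)
    thus ?thesis by simp
  qed
  have "coprime (Apoly m n) (m*n*(m+n))" using c1 c2 c3 by simp
  hence "coprime (Apoly m n) ((m*n*(m+n))^2)" by simp
  with c4 have "coprime (Apoly m n) (4 * (m*n*(m+n))^2)" by simp
  thus ?thesis by (simp add: B_eq)
qed

lemma B_pos: "allowable m n \<Longrightarrow> Bpoly m n > 0"
  unfolding B_eq allowable_def by simp

lemma frac_eq:
  fixes A B A' B' :: int
  assumes "coprime A B" "coprime A' B'" "B > 0" "B' > 0" "A * B' = A' * B"
  shows "B = B' \<and> A = A'"
proof -
  have "B dvd A * B'" using assms(5) by simp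
  hence "B dvd B'" using assms(1) by (simp add: coprime_commute coprime_dvd_mult_right_iff)
  moreover have "B' dvd A' * B" using assms(5) by (metis dvd_triv_right)
  hence "B' dvd B" using assms(2) by (simp add: coprime_commute coprime_dvd_mult_right_iff)
  ultimately have "B = B'" using assms(3,4) by (simp add: zdvd_antisym_nonneg)
  thus ?thesis using assms(5,3) by simp
qed

lemma inj_lemma:
  assumes al: "allowable m n" and al': "allowable m' n'"
    and ta: "t1 m n = a" and ta': "t1 m' n' = a" and a0: "a \<noteq> 0"
    and ce: "cval m n = cval m' n'"
  shows "m = m' \<and> n = n'"
proof -
  have "of_int (Apoly m n) / of_int (Bpoly m n) = (of_int (Apoly m' n') / of_int (Bpoly m' n') :: rat)"
    using ce unfolding cval_def by simp
  hence "of_int (Apoly m n * Bpoly m' n') = (of_int (Apoly m' n' * Bpoly m n) :: rat)"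
    using B_pos[OF al] B_pos[OF al'] by (simp add: divide_eq_eq eq_divide_eq)
  hence "Apoly m n * Bpoly m' n' = Apoly m' n' * Bpoly m n" by (simp only: of_int_eq_iff)
  from frac_eq[OF AB_coprime[OF al] AB_coprime[OF al'] B_pos[OF al] B_pos[OF al'] this]
  have BB: "Bpoly m n = Bpoly m' n'" and AA: "Apoly m n = Apoly m' n'" by auto
  define P where "P = m*n*(m+n)"
  define P' where "P' = m'*n'*(m'+n')"
  have P0: "P \<noteq> 0" using al unfolding allowable_def P_def by simp
  have "4*P^2 = 4*P'^2" using BB B_eq[of m n] B_eq[of m' n'] unfolding P_def P'_def by simp
  hence "P^2 = P'^2" by simp
  hence PP: "P' = P \<or> P' = -P" by (metis power2_eq_iff)
  have e1: "t1 m n ^ 2 - Apoly m n = 2 * P * t2 m n" using E1 unfolding P_def .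
  have e2: "t2 m n ^ 2 - Apoly m n = - 2 * P * t3 m n" using E2 unfolding P_def .
  have e3: "t3 m n ^ 2 - Apoly m n = 2 * P * t1 m n" using E3 unfolding P_def .
  have f1: "t1 m' n' ^ 2 - Apoly m n = 2 * P' * t2 m' n'" using E1 AA unfolding P'_def by simp
  have f2: "t2 m' n' ^ 2 - Apoly m n = - 2 * P' * t3 m' n'" using E2 AA unfolding P'_def by simp
  have f3: "t3 m' n' ^ 2 - Apoly m n = 2 * P' * t1 m' n'" using E3 AA unfolding P'_def by simp
  have PPe: "P' = P"
  proof (rule ccontr)
    assume "P' \<noteq> P"
    with PP have Pn: "P' = -P" by simp
    have "2 * P * t2 m n = 2 * P * (- t2 m' n')" using e1 f1 ta ta' Pn by simp
    hence "(2 * P) * t2 m' n' = (2*P) * (- t2 m n)" by (simp add: algebra_simps)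
    hence g2: "t2 m' n' = - t2 m n" using P0 by (simp only: mult_cancel_left) simp
    have "- 2 * P * t3 m n = - 2 * P * (- t3 m' n')" using e2 f2 g2 Pn by simp
    hence "(2 * P) * t3 m' n' = (2*P) * (- t3 m n)" by (simp add: algebra_simps)
    hence g3: "t3 m' n' = - t3 m n" using P0 by (simp only: mult_cancel_left) simp
    have "2 * P * t1 m n = 2 * P * (- t1 m' n')" using e3 f3 g3 Pn by simp
    hence "t1 m n = - t1 m n" using P0 ta ta' by simp
    thus False using ta a0 by simp
  qed
  have "2 * P * t2 m n = 2 * P * t2 m' n'" using e1 f1 ta ta' PPe by simp
  hence g2: "t2 m' n' = t2 m n" using P0 by simp
  have "- 2 * P * t3 m n = - 2 * P * t3 m' n'" using e2 f2 g2 PPe by simp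
  hence g3: "t3 m' n' = t3 m n" using P0 by simp
  define u where "u = m^2*(m+n)"
  define u' where "u' = m'^2*(m'+n')"
  define v where "v = m*n^2"
  define v' where "v' = m'*n'^2"
  have uu: "u = u'"
  proof -
    have "t1 m n + t2 m n = 2 * u" unfolding u_def t1_def t2_def by algebra
    moreover have "t1 m' n' + t2 m' n' = 2 * u'" unfolding u'_def t1_def t2_def by algebra
    ultimately show ?thesis using ta ta' g2 by simp
  qed
  have vv: "v = v'"
  proof -
    have "t1 m n - t3 m n = -2 * v" unfolding v_def t1_def t3_def by algebra
    moreover have "t1 m' n' - t3 m' n' = -2 * v'" unfolding v'_def t1_def t3_def by algebra
    ultimately show ?thesis using ta ta' g3 by simp
  qed
  have h1: "m * P = n * u" unfolding P_def u_def by algebra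
  have h2: "m' * P' = n' * u'" unfolding P'_def u'_def by algebra
  have "P * (m * n') = P * (m' * n)"
  proof -
    have "P * (m * n') = n' * (m * P)" by (simp add: algebra_simps)
    also have "\<dots> = n' * n * u" using h1 by (simp add: algebra_simps)
    also have "\<dots> = n * (m' * P')" using h2 uu by (simp add: algebra_simps)
    also have "\<dots> = P * (m' * n)" using PPe by (simp add: algebra_simps)
    finally show ?thesis .
  qed
  hence cr: "m * n' = m' * n" using P0 by simp
  have cmn: "coprime m n" using al unfolding allowable_def by (simp add: coprime_iff_gcd_eq_1)
  have cmn': "coprime m' n'" using al' unfolding allowable_def by (simp add: coprime_iff_gcd_eq_1)
  have "m dvd m' * n" using cr by (metis dvd_triv_left)
  hence d1: "m dvd m'" using cmn by (simp add: coprime_dvd_mult_left_iff)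
  have "m' dvd m * n'" using cr by (metis dvd_triv_left)
  hence d2: "m' dvd m" using cmn' by (simp add: coprime_dvd_mult_left_iff)
  have "\<bar>m\<bar> = \<bar>m'\<bar>" by (rule zdvd_antisym_abs[OF d1 d2])
  hence mm: "m' = m \<or> m' = -m" by auto
  have m0: "m \<noteq> 0" "n \<noteq> 0" using al unfolding allowable_def by auto
  show ?thesis
  proof (cases "m' = m")
    case True
    then show ?thesis using cr m0 by simp
  next
    case False
    hence "m' = -m" using mm by simp
    hence "m * (n' + n) = 0" using cr by (simp add: algebra_simps)
    hence "n' + n = 0" using m0 by simp
    hence "n' = -n" by simp
    with \<open>m' = -m\<close> have "v' = - v" unfolding v_def v'_def by simp
    hence "v = 0" using vv by simp
    thus ?thesis using m0 unfolding v_def by simp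
  qed
qed

theorem theorem10:
  fixes a :: int
  assumes "a > 0"
  shows "card {c :: rat. \<exists>m n. allowable m n \<and> cval m n = c \<and> a \<in> c_triangle m n}
       = card {p :: int \<times> int. allowable (fst p) (snd p) \<and> t1 (fst p) (snd p) = a}"
proof -
  let ?S = "{p :: int \<times> int. allowable (fst p) (snd p) \<and> t1 (fst p) (snd p) = a}"
  have eq: "{c :: rat. \<exists>m n. allowable m n \<and> cval m n = c \<and> a \<in> c_triangle m n}
        = (\<lambda>p. cval (fst p) (snd p)) ` ?S"
  proof (rule set_eqI, rule iffI)
    fix c assume "c \<in> {c :: rat. \<exists>m n. allowable m n \<and> cval m n = c \<and> a \<in> c_triangle m n}"
    then obtain m n where al: "allowable m n" and c: "cval m n = c" and tr: "a \<in> c_triangle m n" by auto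
    have ex: "\<exists>m' n'. allowable m' n' \<and> cval m' n' = c \<and> t1 m' n' = a"
    proof -
      have "a = \<bar>t1 m n\<bar> \<or> a = \<bar>t2 m n\<bar> \<or> a = \<bar>t3 m n\<bar>" using tr unfolding c_triangle_def by auto
      moreover
      { assume h: "a = \<bar>t1 m n\<bar>"
        have ?thesis
        proof (cases "t1 m n \<ge> 0")
          case True thus ?thesis using al c h by auto
        next
          case False thus ?thesis proof -
            have "allowable (-m) (-n) \<and> cval (-m) (-n) = c \<and> t1 (-m) (-n) = a"
              using allow_neg[OF al] cval_neg[of m n] t1_neg[of m n] c h False by simp
            thus ?thesis by blast
          qed
        qed }
      moreover
      { assume h: "a = \<bar>t2 m n\<bar>"
        have ?thesis
        proof (cases "t2 m n \<ge> 0")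
          case True thus ?thesis proof -
            have "allowable (-(m+n)) (m) \<and> cval (-(m+n)) (m) = c \<and> t1 (-(m+n)) (m) = a"
              using allow_rot2[OF al] cval_rot2[of m n] t1_rot2[of m n] c h True by simp
            thus ?thesis by blast
          qed
        next
          case False thus ?thesis proof -
            have "allowable (-(-(m+n))) (-m) \<and> cval (-(-(m+n))) (-m) = c \<and> t1 (-(-(m+n))) (-m) = a"
              using allow_neg[OF allow_rot2[OF al]] cval_neg[of "-(m+n)" m]
              cval_rot2[of m n] t1_neg[of "-(m+n)" m] t1_rot2[of m n] c h False by simp
            thus ?thesis by blast
          qed
        qed }
      moreover
      { assume h: "a = \<bar>t3 m n\<bar>"
        have ?thesis
        proof (cases "t3 m n \<ge> 0")
          case True thus ?thesis proof -
            have "allowable (-n) (m+n) \<and> cval (-n) (m+n) = c \<and> t1 (-n) (m+n) = a"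
              using allow_rot3[OF al] cval_rot3[where m=m and n=n] t1_rot3[where m=m and n=n] c h True by (metis abs_of_nonneg)
            thus ?thesis by blast
          qed
        next
          case False thus ?thesis proof -
            have "allowable (-(-n)) (-(m+n)) \<and> cval (-(-n)) (-(m+n)) = c \<and> t1 (-(-n)) (-(m+n)) = a"
              using allow_neg[OF allow_rot3[OF al]] cval_neg[of "-n" "m+n"]
              cval_rot3[where m=m and n=n] t1_neg[of "-n" "m+n"] t1_rot3[where m=m and n=n] c h False by simp
            thus ?thesis by blast
          qed
        qed }
      ultimately show ?thesis by blast
    qed
    then obtain m' n' where "allowable m' n'" "cval m' n' = c" "t1 m' n' = a" by blast
    thus "c \<in> (\<lambda>p. cval (fst p) (snd p)) ` ?S" by (intro image_eqI[of _ _ "(m', n')"]) auto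
  next
    fix c assume "c \<in> (\<lambda>p. cval (fst p) (snd p)) ` ?S"
    then obtain m n where "allowable m n" "t1 m n = a" "c = cval m n" by auto
    moreover have "a \<in> c_triangle m n" using \<open>t1 m n = a\<close> assms unfolding c_triangle_def by auto
    ultimately show "c \<in> {c :: rat. \<exists>m n. allowable m n \<and> cval m n = c \<and> a \<in> c_triangle m n}"
      by blast
  qed
  have inj: "inj_on (\<lambda>p. cval (fst p) (snd p)) ?S"
  proof (rule inj_onI)
    fix p q assume "p \<in> ?S" "q \<in> ?S" "cval (fst p) (snd p) = cval (fst q) (snd q)"
    with inj_lemma[of "fst p" "snd p" "fst q" "snd q" a] assms
    have "fst p = fst q \<and> snd p = snd q" by auto
    thus "p = q" by (simp add: prod_eq_iff)
  qed
  show ?thesis unfolding eq using card_image[OF inj] .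
qed

end
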